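(* Let $n\ge1$, $q\ge2$ be integers, $b\in\{1,\dots,q-1\}$, $c=\lceil q/b\rceil$ and $d=cb-q$. Let $a\in\{0,\dots,q-1\}$ be unknown and let $\mathbf k\in\mathbb Z_q^n$ be an unknown key having at least one entry that is a unit modulo $q$. Given one query to the quantum oracle $U_{\mathsf{LRF}}:|\mathbf x\rangle|z\rangle\mapsto|\mathbf x\rangle|z+\mathsf{LRF}_{\mathbf k,a,b}(\mathbf x)\bmod c\rangle$ ($\mathbf x\in\mathbb Z_q^n$, $z\in\mathbb Z_c$), the following algorithm outputs $\mathbf k$ with probability at least $4/\pi^2-O(d/q)$: (1) prepare $\frac{1}{\sqrt{q^n}}\sum_{\mathbf x\in\mathbb Z_q^n}|\mathbf x\rangle\otimes\frac{1}{\sqrt c}\sum_{z=0}^{c-1}\omega_c^z|z\rangle$ with $\omega_c=e^{2\pi i/c}$; (2) apply $U_{\mathsf{LRF}}$ once; (3) discard the last register and apply $\mathsf{QFT}_{\mathbb Z_q}^{\otimes n}$; (4) measure in the computational basis and output the outcome.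
   Context: For $a\in\mathbb Z_q$, $b\in\mathbb Z_q\setminus\{0\}$, $c=\lceil q/b\rceil$, partition $\mathbb Z_q$ into blocks $I_v(a,b)=\{a+vb,\dots,a+vb+b-1\}$ (mod $q$) for $v\in\{0,\dots,c-2\}$ and $I_{c-1}(a,b)=\{a+(c-1)b,\dots,a+q-1\}$ (mod $q$). The linear rounding function with key $\mathbf k\in\mathbb Z_q^n$ is $\mathsf{LRF}_{\mathbf k,a,b}:\mathbb Z_q^n\to\mathbb Z_c$, $\mathsf{LRF}_{\mathbf k,a,b}(\mathbf x)=v$ iff $\langle\mathbf x,\mathbf k\rangle\in I_v(a,b)$, where $\langle\cdot,\cdot\rangle$ is the inner product modulo $q$. The quantum Fourier transform over $\mathbb Z_q$ is $\mathsf{QFT}_{\mathbb Z_q}|x\rangle=\frac{1}{\sqrt q}\sum_{y\in\mathbb Z_q}e^{2\pi i xy/q}|y\rangle$. *)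

theory Defs
  imports Complex_Main
begin

text \<open>Elements of Z_q^n are represented as lists of length n with entries in {0..<q}.\<close>
definition vecs :: "nat \<Rightarrow> nat \<Rightarrow> nat list set" where
  "vecs n q = {xs. length xs = n \<and> set xs \<subseteq> {..<q}}"

definition ip :: "nat \<Rightarrow> nat list \<Rightarrow> nat list \<Rightarrow> nat" where
  "ip q xs ks = (\<Sum>i<length xs. xs ! i * ks ! i) mod q"

definition lrf_c :: "nat \<Rightarrow> nat \<Rightarrow> nat" where
  "lrf_c q b = nat \<lceil>real q / real b\<rceil>"

definition block :: "nat \<Rightarrow> nat \<Rightarrow> nat \<Rightarrow> nat \<Rightarrow> nat set" where
  "block q a b v =
     (if v + 2 \<le> lrf_c q b then {(a + v * b + j) mod q | j. j < b}
      else {(a + v * b + j) mod q | j. j < q - v * b})"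

definition LRF :: "nat \<Rightarrow> nat list \<Rightarrow> nat \<Rightarrow> nat \<Rightarrow> nat list \<Rightarrow> nat" where
  "LRF q k a b x = (THE v. v < lrf_c q b \<and> ip q x k \<in> block q a b (v::nat))"

definition init_state :: "nat \<Rightarrow> nat \<Rightarrow> nat \<Rightarrow> nat list \<times> nat \<Rightarrow> complex" where
  "init_state n q c = (\<lambda>(x, z).
     if x \<in> vecs n q \<and> z < c then
       complex_of_real (1 / sqrt (real q ^ n)) * complex_of_real (1 / sqrt (real c))
       * exp (2 * pi * \<i> * of_nat z / of_nat c)
     else 0)"

definition apply_oracle :: "(nat list \<Rightarrow> nat) \<Rightarrow> nat \<Rightarrow> (nat list \<times> nat \<Rightarrow> complex)
    \<Rightarrow> nat list \<times> nat \<Rightarrow> complex" where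
  "apply_oracle f c \<psi> = (\<lambda>(x, z'). \<Sum>z<c. if (z + f x) mod c = z' then \<psi> (x, z) else 0)"

definition qft_coef :: "nat \<Rightarrow> nat \<Rightarrow> nat list \<Rightarrow> nat list \<Rightarrow> complex" where
  "qft_coef n q y x =
     (\<Prod>i<n. complex_of_real (1 / sqrt (real q)) * exp (2 * pi * \<i> * of_nat (x ! i * y ! i) / of_nat q))"

text \<open>Probability that measuring the first register (after discarding the second one and
  applying QFT^{\<otimes> n} to the first) yields y: the marginal of the joint state
  (QFT^{\<otimes> n} \<otimes> I) \<psi>.\<close>
definition outcome_prob :: "nat \<Rightarrow> nat \<Rightarrow> nat \<Rightarrow> (nat list \<times> nat \<Rightarrow> complex) \<Rightarrow> nat list \<Rightarrow> real" where
  "outcome_prob n q c \<psi> y = (\<Sum>z<c. (cmod (\<Sum>x\<in>vecs n q. qft_coef n q y x * \<psi> (x, z)))\<^sup>2)"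

definition success_prob :: "nat \<Rightarrow> nat \<Rightarrow> nat \<Rightarrow> nat \<Rightarrow> nat list \<Rightarrow> real" where
  "success_prob n q a b k =
     (let c = lrf_c q b in
      outcome_prob n q c (apply_oracle (LRF q k a b) c (init_state n q c)) k)"

end

theory Submission
  imports Defs "HOL-Analysis.Analysis" "HOL-Number_Theory.Cong"
begin


lemma c_facts:
  assumes "1 \<le> b" "b < q"
  shows "q \<le> lrf_c q b * b" "lrf_c q b * b < q + b" "2 \<le> lrf_c q b"
proof -
  have bp: "real b > 0" using assms by simp
  have c1: "real q / real b \<le> of_int \<lceil>real q / real b\<rceil>" by (rule le_of_int_ceiling)
  have c2: "of_int \<lceil>real q / real b\<rceil> < real q / real b + 1" using ceiling_correct[of "real q / real b"] by linarith
  have pos: "\<lceil>real q / real b\<rceil> \<ge> 0" using c1 by (smt (verit) divide_nonneg_nonneg of_int_0_le_iff of_nat_0_le_iff)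
  have rc: "real (lrf_c q b) = of_int \<lceil>real q / real b\<rceil>" unfolding lrf_c_def using pos by (simp only: of_nat_nat[OF pos] of_int_of_nat_eq)
  have "real q \<le> real (lrf_c q b) * real b" using c1 unfolding rc pos_divide_le_eq[OF bp] .
  then show "q \<le> lrf_c q b * b" by (metis of_nat_le_iff of_nat_mult)
  have e: "real q / real b + 1 = (real q + real b) / real b" using bp by (simp add: field_simps)
  have "real (lrf_c q b) * real b < real q + real b" using c2 unfolding rc e pos_less_divide_eq[OF bp] .
  then show "lrf_c q b * b < q + b" by (metis of_nat_less_iff of_nat_mult of_nat_add)
  have "real q / real b > 1" using assms bp by (simp add: field_simps)
  then have "\<lceil>real q / real b\<rceil> \<ge> 2" by linarith
  then show "2 \<le> lrf_c q b" unfolding lrf_c_def by linarith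
qed

lemma mod_shift_back:
  fixes a m q :: nat
  assumes "m < q" "a < q"
  shows "((a + m) mod q + q - a) mod q = m"
proof (cases "a + m < q")
  case True
  then have "(a + m) mod q + q - a = m + q" by simp
  then show ?thesis using assms by simp
next
  case False
  then have "(a + m) mod q = a + m - q" using assms by (simp add: mod_if)
  then have "(a + m) mod q + q - a = m" using False by simp
  then show ?thesis using assms by simp
qed

lemma LRF_eq:
  assumes "1 \<le> b" "b < q" "a < q"
  shows "LRF q k a b x = ((ip q x k + q - a) mod q) div b"
proof -
  define s where "s = ip q x k"
  define c where "c = lrf_c q b"
  define t where "t = (s + q - a) mod q"
  define v where "v = t div b"
  have q0: "q > 0" using assms by simp
  have sq: "s < q" unfolding s_def ip_def using q0 by simp
  have tq: "t < q" unfolding t_def using q0 by simp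
  have cb: "q \<le> c * b" "c * b < q + b" "2 \<le> c" using c_facts[OF assms(1,2)] c_def by auto
  have at: "(a + t) mod q = s"
  proof -
    have "(a + t) mod q = (a + (s + q - a)) mod q" by (simp add: t_def mod_add_right_eq)
    also have "a + (s + q - a) = s + q" using assms by simp
    finally show ?thesis using sq by simp
  qed
  have vb: "v * b \<le> t" "t = v * b + t mod b" "t mod b < b" using assms by (auto simp: v_def)
  have vc: "v < c"
  proof -
    have "v * b < c * b" using vb tq cb by linarith
    then show ?thesis by simp
  qed
  have inb: "s \<in> block q a b v"
  proof -
    have "(a + v * b + t mod b) mod q = s" using at vb by (metis add.assoc)
    moreover have "t mod b < q - v * b" using vb tq by linarith
    ultimately show ?thesis unfolding block_def using vb(3) c_def by auto
  qed
  have uniq: "v' = v" if vh: "v' < c" "s \<in> block q a b v'" for v'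
  proof -
    obtain j where j: "s = (a + v' * b + j) mod q" "v' * b + j < q" "j < b"
    proof (cases "v' + 2 \<le> c")
      case True
      then obtain j where "s = (a + v' * b + j) mod q" "j < b" using vh(2) unfolding block_def c_def by auto
      moreover have "(v' + 1) * b \<le> (c - 1) * b" using True by (intro mult_le_mono1) simp
      moreover have "(c - 1) * b < q" using cb q0 by (simp add: diff_mult_distrib)
      ultimately show ?thesis using that by (intro that[of j]) auto
    next
      case False
      then obtain j where j: "s = (a + v' * b + j) mod q" "j < q - v' * b" using vh(2) unfolding block_def c_def by auto
      have "c \<le> v' + 1" using False by simp
      then have "c * b \<le> v' * b + b" by (metis add_mult_distrib mult_1 mult_le_mono1)
      then show ?thesis using that vh j cb by auto
    qed
    have "t = v' * b + j" unfolding t_def using j mod_shift_back[OF j(2) assms(3)] by (simp add: add.assoc)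
    then show ?thesis unfolding v_def using j(3) by simp
  qed
  have "LRF q k a b x = v" unfolding LRF_def c_def[symmetric] s_def[symmetric]
  proof (rule the_equality)
    show "v < c \<and> s \<in> block q a b v" using vc inb by blast
  next
    fix v' assume "v' < c \<and> s \<in> block q a b v'"
    then show "v' = v" using uniq by blast
  qed
  then show ?thesis by (simp add: v_def t_def s_def)
qed



lemma cis_periodic:
  assumes "c > 0"
  shows "cis (2 * pi * real m / real c) = cis (2 * pi * real (m mod c) / real c)"
proof -
  have m: "real m = real (m div c) * real c + real (m mod c)"
    by (metis div_mult_mod_eq of_nat_add of_nat_mult)
  have "2 * pi * real m / real c = 2 * pi * real (m div c) + 2 * pi * real (m mod c) / real c"
    using assms unfolding m by (simp add: field_simps)
  then have "cis (2 * pi * real m / real c) = cis (2 * pi * real (m div c)) * cis (2 * pi * real (m mod c) / real c)"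
    unfolding cis_mult by simp
  also have "cis (2 * pi * real (m div c)) = 1" by (rule cis_multiple_2pi) simp
  finally show ?thesis by simp
qed

lemma cis_minus_one: "cmod (cis t - 1) = 2 * \<bar>sin (t / 2)\<bar>"
  unfolding cis_conv_exp by (rule dist_exp_i_1)

lemma cis_dist: "cmod (cis x - cis y) \<le> \<bar>x - y\<bar>"
proof -
  have "cis x - cis y = cis y * (cis (x - y) - 1)" by (simp add: algebra_simps cis_mult)
  then have "cmod (cis x - cis y) = cmod (cis (x - y) - 1)" by (simp add: norm_mult)
  also have "\<dots> = 2 * \<bar>sin ((x - y) / 2)\<bar>" by (rule cis_minus_one)
  also have "\<dots> \<le> \<bar>x - y\<bar>" using abs_sin_x_le_abs_x[of "(x - y) / 2"] by simp
  finally show ?thesis .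
qed

lemma c_sin:
  fixes c :: nat
  assumes "2 \<le> c"
  shows "2 \<le> real c * sin (pi / real c)"
proof (cases "c = 2")
  case True
  then show ?thesis by simp
next
  case False
  then have c3: "real c \<ge> 3" using assms by simp
  define x where "x = pi / real c"
  have x0: "x \<ge> 0" unfolding x_def by simp
  have sc: "(\<Sum>m<3. sin_coeff m * x ^ m) = x"
    by (simp add: numeral_3_eq_3 sin_coeff_def)
  have "\<bar>sin x - x\<bar> \<le> inverse (fact 3) * \<bar>x\<bar> ^ 3"
    using Maclaurin_sin_bound[of x 3] unfolding sc .
  moreover have f3: "inverse (fact 3 :: real) * \<bar>x\<bar> ^ 3 = x ^ 3 / 6"
  proof -
    have a: "(fact 3 :: real) = 6" by (simp add: numeral_3_eq_3)
    have b: "\<bar>x\<bar> = x" using x0 by (rule abs_of_nonneg)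
    show ?thesis unfolding a b by (simp only: divide_inverse mult.commute)
  qed
  ultimately have "\<bar>sin x - x\<bar> \<le> x ^ 3 / 6" by (simp only:)
  then have s: "sin x \<ge> x - x ^ 3 / 6" by (metis abs_le_D2 minus_diff_eq le_diff_eq diff_le_eq add.commute)
  have "real c * sin x \<ge> real c * (x - x ^ 3 / 6)" using s c3 by (intro mult_left_mono) auto
  also have "real c * (x - x ^ 3 / 6) = pi - pi ^ 3 / (6 * real c ^ 2)"
    unfolding x_def using c3 by (simp add: field_simps power2_eq_square power3_eq_cube)
  finally have 1: "real c * sin x \<ge> pi - pi ^ 3 / (6 * real c ^ 2)" .
  have "real c ^ 2 \<ge> 3 ^ 2" using c3 by (intro power_mono) auto
  then have "real c ^ 2 \<ge> 9" by simp
  then have "pi ^ 3 / (6 * real c ^ 2) \<le> pi ^ 3 / 54"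
    using c3 by (intro divide_left_mono) auto
  moreover have "pi ^ 3 \<le> 3.15 ^ 3" using pi_approx by (intro power_mono) auto
  then have "pi ^ 3 / 54 \<le> 3.15 ^ 3 / 54" by (intro divide_right_mono) auto
  ultimately have 2: "pi ^ 3 / (6 * real c ^ 2) \<le> 3.15 ^ 3 / 54" by (rule order.trans)
  have 3: "(3.15::real) ^ 3 / 54 \<le> 0.6" by (simp add: power3_eq_cube)
  have "real c * sin (pi / real c) \<ge> pi - pi ^ 3 / (6 * real c ^ 2)" using 1 unfolding x_def .
  then show ?thesis using 2 3 pi_gt3 by linarith
qed

lemma sum_mod_rep:
  fixes g :: "nat \<Rightarrow> complex"
  shows "(\<Sum>t<c * b. g (t mod b)) = of_nat c * (\<Sum>j<b. g j)"
proof -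
  have "(\<Sum>t<c * b. g (t mod b)) = (\<Sum>m<c. \<Sum>t\<in>{m * b..<m * b + b}. g (t mod b))"
    by (rule sum.nat_group[symmetric])
  also have "\<dots> = (\<Sum>m<c. \<Sum>j<b. g j)"
  proof (rule sum.cong[OF refl])
    fix m
    have "(\<Sum>t\<in>{m * b..<m * b + b}. g (t mod b)) = (\<Sum>t\<in>{0 + m * b..<b + m * b}. g (t mod b))"
      by (simp add: add.commute)
    also have "\<dots> = (\<Sum>j\<in>{0..<b}. g ((j + m * b) mod b))" by (rule sum.shift_bounds_nat_ivl)
    also have "\<dots> = (\<Sum>j<b. g j)" by (intro sum.cong) auto
    finally show "(\<Sum>t\<in>{m * b..<m * b + b}. g (t mod b)) = (\<Sum>j<b. g j)" .
  qed
  also have "\<dots> = of_nat c * (\<Sum>j<b. g j)" by simp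
  finally show ?thesis .
qed

lemma geom_lower:
  assumes "2 \<le> q"
  shows "cmod (\<Sum>j<b. cis (2 * pi * real j / real q)) \<ge> real q * sin (pi * real b / real q) / pi"
proof -
  define w where "w = cis (2 * pi / real q)"
  have q0: "real q > 0" using assms by simp
  have pw: "cis (2 * pi * real j / real q) = w ^ j" for j
  proof -
    have "w ^ j = cis (real j * (2 * pi / real q))" unfolding w_def by (rule Complex.DeMoivre)
    also have "real j * (2 * pi / real q) = 2 * pi * real j / real q" by simp
    finally show ?thesis by simp
  qed
  have sinpos: "sin (pi / real q) > 0" using assms by (intro sin_gt_zero) (auto simp: field_simps)
  have nw: "cmod (w - 1) = 2 * sin (pi / real q)"
    unfolding w_def cis_minus_one using sinpos by simp
  then have w1: "w \<noteq> 1" using sinpos by auto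
  have nw2: "cmod (w - 1) \<le> 2 * pi / real q"
    using cis_dist[of "2 * pi / real q" 0] unfolding w_def by simp
  have nwb: "cmod (w ^ b - 1) = 2 * \<bar>sin (pi * real b / real q)\<bar>"
    unfolding w_def Complex.DeMoivre cis_minus_one by (simp add: field_simps)
  have "(\<Sum>j<b. cis (2 * pi * real j / real q)) = (w ^ b - 1) / (w - 1)"
    unfolding pw by (rule geometric_sum[OF w1])
  then have "cmod (\<Sum>j<b. cis (2 * pi * real j / real q)) = 2 * \<bar>sin (pi * real b / real q)\<bar> / cmod (w - 1)"
    by (simp add: norm_divide nwb)
  also have "\<dots> \<ge> 2 * \<bar>sin (pi * real b / real q)\<bar> / (2 * pi / real q)"
    using nw2 nw sinpos by (intro frac_le) auto
  moreover have "2 * \<bar>sin (pi * real b / real q)\<bar> / (2 * pi / real q) \<ge> real q * sin (pi * real b / real q) / pi"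
    using q0 by (simp add: field_simps)
  ultimately show ?thesis by linarith
qed



lemma exp_conv: "exp (complex_of_real (2 * pi) * \<i> * of_nat z / of_nat c) = cis (2 * pi * real z / real c)"
  unfolding cis_conv_exp by (rule arg_cong[where f=exp]) (simp add: divide_inverse mult_ac)

lemma exp_conv2: "exp (2 * complex_of_real pi * \<i> * of_nat z / of_nat c) = cis (2 * pi * real z / real c)"
proof -
  have "2 * complex_of_real pi = complex_of_real (2 * pi)" by simp
  then show ?thesis by (simp only: exp_conv)
qed

lemma cis_sum: "(\<Prod>i\<in>A. cis (f i)) = cis (\<Sum>i\<in>A. f i)"
  by (induct A rule: infinite_finite_induct) (simp_all add: cis_mult)

lemma oracle_val:
  assumes "x \<in> vecs n q" "z' < c"
  shows "apply_oracle f c (init_state n q c) (x, z') =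
    complex_of_real (1 / sqrt (real q ^ n) * (1 / sqrt (real c))) * cis (2 * pi * real z' / real c)
      * cis (- (2 * pi * real (f x) / real c))"
proof -
  have c0: "c > 0" using assms by simp
  define z0 where "z0 = (z' + (c - f x mod c)) mod c"
  have z0c: "z0 < c" using c0 by (simp add: z0_def)
  have fdm: "f x = c * (f x div c) + f x mod c" by simp
  have fm: "f x mod c < c" using c0 by simp
  have e0: "f x - f x mod c = c * (f x div c)" by (simp add: minus_mod_eq_mult_div)
  have e1: "z' + (c - f x mod c) + f x = z' + c * Suc (f x div c)"
    using e0 fm mod_less_eq_dividend[of "f x" c] by (simp only: mult_Suc_right)
  have cz0: "[z0 + f x = z'] (mod c)"
  proof -
    have "(z0 + f x) mod c = (z' + (c - f x mod c) + f x) mod c"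
      by (simp add: z0_def mod_add_left_eq)
    also have "\<dots> = z' mod c" unfolding e1 by (rule mod_mult_self2)
    also have "\<dots> = z'" using assms by simp
    finally show ?thesis unfolding cong_def using assms by simp
  qed
  have iff: "((z + f x) mod c = z') = (z = z0)" if "z < c" for z
  proof
    assume "(z + f x) mod c = z'"
    then have "[z + f x = z0 + f x] (mod c)" using cz0 assms unfolding cong_def by simp
    then have "[z = z0] (mod c)" by (rule cong_add_rcancel_nat[THEN iffD1])
    then show "z = z0" using that z0c unfolding cong_def by simp
  next
    assume "z = z0"
    then show "(z + f x) mod c = z'" using cz0 assms unfolding cong_def by simp
  qed
  have hc: "cis (2 * pi * real z0 / real c) = cis (2 * pi * real z' / real c) * cis (- (2 * pi * real (f x) / real c))"
  proof -
    have zm: "(z0 + f x) mod c = z'" using cz0 assms unfolding cong_def by simp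
    have "cis (2 * pi * real z0 / real c) * cis (2 * pi * real (f x) / real c) = cis (2 * pi * real (z0 + f x) / real c)"
      by (simp add: cis_mult add_divide_distrib distrib_left)
    also have "\<dots> = cis (2 * pi * real ((z0 + f x) mod c) / real c)" by (rule cis_periodic[OF c0])
    also have "\<dots> = cis (2 * pi * real z' / real c)" by (simp only: zm)
    finally have h: "cis (2 * pi * real z0 / real c) * cis (2 * pi * real (f x) / real c) = cis (2 * pi * real z' / real c)" .
    have "cis (2 * pi * real z' / real c) * cis (- (2 * pi * real (f x) / real c))
        = cis (2 * pi * real z0 / real c) * cis (2 * pi * real (f x) / real c) * cis (- (2 * pi * real (f x) / real c))"
      by (simp only: h)
    also have "\<dots> = cis (2 * pi * real z0 / real c)" by (simp add: cis_mult)
    finally show ?thesis by (rule sym)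
  qed
  have "apply_oracle f c (init_state n q c) (x, z') = (\<Sum>z<c. if (z + f x) mod c = z' then init_state n q c (x, z) else 0)"
    by (simp add: apply_oracle_def)
  also have "\<dots> = (\<Sum>z<c. if z = z0 then init_state n q c (x, z) else 0)"
    by (rule sum.cong[OF refl]) (simp add: iff)
  also have "\<dots> = init_state n q c (x, z0)" using z0c by simp
  also have "\<dots> = complex_of_real (1 / sqrt (real q ^ n)) * complex_of_real (1 / sqrt (real c)) * cis (2 * pi * real z0 / real c)"
    unfolding init_state_def case_prod_conv if_P[OF conjI[OF assms(1) z0c]] exp_conv ..
  also have "\<dots> = complex_of_real (1 / sqrt (real q ^ n)) * complex_of_real (1 / sqrt (real c)) * (cis (2 * pi * real z' / real c) * cis (- (2 * pi * real (f x) / real c)))"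
    by (simp only: hc)
  finally show ?thesis by (simp only: of_real_mult mult.assoc)
qed



lemma qft_val:
  assumes "x \<in> vecs n q" "q > 0"
  shows "qft_coef n q k x = complex_of_real ((1 / sqrt (real q)) ^ n) * cis (2 * pi * real (ip q x k) / real q)"
proof -
  have len: "length x = n" using assms unfolding vecs_def by simp
  have "qft_coef n q k x = (\<Prod>i<n. complex_of_real (1 / sqrt (real q)) * cis (2 * pi * real (x ! i * k ! i) / real q))"
    unfolding qft_coef_def exp_conv ..
  also have "\<dots> = complex_of_real (1 / sqrt (real q)) ^ n * cis (\<Sum>i<n. 2 * pi * real (x ! i * k ! i) / real q)"
    by (simp only: prod.distrib prod_constant cis_sum card_lessThan)
  also have "(\<Sum>i<n. 2 * pi * real (x ! i * k ! i) / real q) = 2 * pi * real (\<Sum>i<n. x ! i * k ! i) / real q"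
    by (simp add: sum_divide_distrib sum_distrib_left)
  also have "cis \<dots> = cis (2 * pi * real (ip q x k) / real q)"
    unfolding ip_def len by (rule cis_periodic[OF assms(2)])
  finally show ?thesis by simp
qed



lemma rot_sum:
  fixes h :: "nat \<Rightarrow> complex"
  assumes "s < q"
  shows "(\<Sum>m<q. h ((s + m) mod q)) = (\<Sum>m<q. h m)"
proof -
  define r where "r = (\<lambda>m. (s + m) mod q)"
  have q0: "q > 0" using assms by simp
  have inj: "inj_on r {..<q}"
  proof (rule inj_onI)
    fix m1 m2 assume h: "m1 \<in> {..<q}" "m2 \<in> {..<q}" "r m1 = r m2"
    then have "[s + m1 = s + m2] (mod q)" unfolding r_def cong_def by simp
    then have "[m1 = m2] (mod q)" by (rule cong_add_lcancel_nat[THEN iffD1])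
    then show "m1 = m2" using h unfolding cong_def by simp
  qed
  have sub: "r ` {..<q} \<subseteq> {..<q}" unfolding r_def using q0 by auto
  have img: "r ` {..<q} = {..<q}" by (rule endo_inj_surj[OF _ sub inj]) simp
  have "(\<Sum>m<q. h m) = sum h (r ` {..<q})" unfolding img ..
  also have "\<dots> = (\<Sum>m<q. h (r m))" by (rule sum.reindex[OF inj, unfolded comp_def])
  finally show ?thesis unfolding r_def by simp
qed

lemma vecs_finite_card: "finite (vecs n q)" "card (vecs n q) = q ^ n"
proof -
  have e: "vecs n q = {xs. set xs \<subseteq> {..<q} \<and> length xs = n}" unfolding vecs_def by auto
  show "finite (vecs n q)" unfolding e by (rule finite_lists_length_eq) simp
  show "card (vecs n q) = q ^ n" unfolding e by (simp add: card_lists_length_eq)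
qed

lemma ip_update:
  assumes "x \<in> vecs n q" "i < n" "[k ! i * u = 1] (mod q)"
  shows "ip q (x[i := (x ! i + m * u) mod q]) k = (ip q x k + m) mod q"
proof -
  have len: "length x = n" using assms unfolding vecs_def by simp
  define y where "y = (x ! i + m * u) mod q"
  define R where "R = (\<Sum>j\<in>{..<n} - {i}. x ! j * k ! j)"
  have s1: "(\<Sum>j<n. x ! j * k ! j) = x ! i * k ! i + R"
    unfolding R_def using assms(2) by (subst sum.remove[of _ i]) auto
  have s2: "(\<Sum>j<n. x[i := y] ! j * k ! j) = y * k ! i + R"
  proof -
    have "(\<Sum>j<n. x[i := y] ! j * k ! j) = x[i := y] ! i * k ! i + (\<Sum>j\<in>{..<n} - {i}. x[i := y] ! j * k ! j)"
      using assms(2) by (subst sum.remove[of _ i]) auto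
    also have "(\<Sum>j\<in>{..<n} - {i}. x[i := y] ! j * k ! j) = R"
      unfolding R_def by (intro sum.cong) auto
    finally show ?thesis using assms(2) len by simp
  qed
  have c1: "[y = x ! i + m * u] (mod q)" unfolding y_def cong_def by simp
  have c2: "[y * k ! i = (x ! i + m * u) * k ! i] (mod q)" by (rule cong_mult[OF c1 cong_refl])
  have c3: "[m * (k ! i * u) = m * 1] (mod q)" using assms(3) by (rule cong_mult[OF cong_refl])
  have "(x ! i + m * u) * k ! i = x ! i * k ! i + m * (k ! i * u)" by (simp add: algebra_simps)
  then have c4: "[y * k ! i = x ! i * k ! i + m] (mod q)"
    using c2 c3 by (metis cong_add_lcancel_nat cong_add cong_refl cong_trans mult_1_right)
  have c5: "[y * k ! i + R = x ! i * k ! i + R + m] (mod q)"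
    using cong_add[OF c4 cong_refl[of R]] by (simp add: algebra_simps)
  have "length (x[i := y]) = n" using len by simp
  have "ip q (x[i := y]) k = (y * k ! i + R) mod q" unfolding ip_def length_list_update len s2 ..
  also have "\<dots> = (x ! i * k ! i + R + m) mod q" using c5 unfolding cong_def .
  also have "\<dots> = ((x ! i * k ! i + R) mod q + m) mod q" by (simp only: mod_add_left_eq)
  also have "\<dots> = (ip q x k + m) mod q" unfolding ip_def len s1 ..
  finally show ?thesis unfolding y_def .
qed



lemma sum_uniform:
  fixes g :: "nat \<Rightarrow> complex"
  assumes k: "k \<in> vecs n q" and i: "i < n" and cop: "coprime (k ! i) q" and q: "q > 0"
  shows "of_nat q * (\<Sum>x\<in>vecs n q. g (ip q x k)) = of_nat (q ^ n) * (\<Sum>s<q. g s)"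
proof -
  obtain u where u: "[k ! i * u = Suc 0] (mod q)" using cong_solve_coprime_nat[OF cop] by blast
  define T where "T = (\<lambda>m x. x[i := (x ! i + m * u) mod q])"
  have fin: "finite (vecs n q)" by (rule vecs_finite_card)
  have shift: "(\<Sum>x\<in>vecs n q. g (ip q x k)) = (\<Sum>x\<in>vecs n q. g ((ip q x k + m) mod q))" for m
  proof -
    have sub: "T m ` vecs n q \<subseteq> vecs n q"
    proof
      fix y assume "y \<in> T m ` vecs n q"
      then obtain x where x: "x \<in> vecs n q" "y = T m x" by blast
      have "set y \<subseteq> insert ((x ! i + m * u) mod q) (set x)" unfolding x T_def by (rule set_update_subset_insert)
      then show "y \<in> vecs n q" using x q unfolding vecs_def T_def by auto
    qed
    have inj: "inj_on (T m) (vecs n q)"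
    proof (rule inj_onI)
      fix x y assume h: "x \<in> vecs n q" "y \<in> vecs n q" "T m x = T m y"
      have lx: "length x = n" "length y = n" using h unfolding vecs_def by auto
      have "x ! i \<in> set x" "y ! i \<in> set y" using i lx by auto
      then have xi: "x ! i < q" "y ! i < q" using h unfolding vecs_def by auto
      show "x = y"
      proof (rule nth_equalityI)
        show "length x = length y" using lx by simp
        fix j assume j: "j < length x"
        show "x ! j = y ! j"
        proof (cases "j = i")
          case True
          have "T m x ! i = T m y ! i" using h by simp
          then have "(x ! i + m * u) mod q = (y ! i + m * u) mod q" unfolding T_def using i lx by simp
          then have "[x ! i = y ! i] (mod q)" unfolding cong_def[symmetric] by (rule cong_add_rcancel_nat[THEN iffD1])
          then show ?thesis using True xi unfolding cong_def by simp
        next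
          case False
          have "T m x ! j = T m y ! j" using h by simp
          then show ?thesis unfolding T_def using False by simp
        qed
      qed
    qed
    have img: "T m ` vecs n q = vecs n q" by (rule endo_inj_surj[OF fin sub inj])
    have "(\<Sum>x\<in>vecs n q. g (ip q x k)) = sum (\<lambda>x. g (ip q x k)) (T m ` vecs n q)" unfolding img ..
    also have "\<dots> = (\<Sum>x\<in>vecs n q. g (ip q (T m x) k))" by (rule sum.reindex[OF inj, unfolded comp_def])
    also have "\<dots> = (\<Sum>x\<in>vecs n q. g ((ip q x k + m) mod q))"
      using u i unfolding T_def by (intro sum.cong refl) (simp add: ip_update)
    finally show ?thesis .
  qed
  have "of_nat q * (\<Sum>x\<in>vecs n q. g (ip q x k)) = (\<Sum>m<q. \<Sum>x\<in>vecs n q. g (ip q x k))" by simp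
  also have "\<dots> = (\<Sum>m<q. \<Sum>x\<in>vecs n q. g ((ip q x k + m) mod q))" using shift by simp
  also have "\<dots> = (\<Sum>x\<in>vecs n q. \<Sum>m<q. g ((ip q x k + m) mod q))" by (rule sum.swap)
  also have "\<dots> = (\<Sum>x\<in>vecs n q. \<Sum>s<q. g s)"
  proof (rule sum.cong[OF refl])
    fix x assume "x \<in> vecs n q"
    have "ip q x k < q" unfolding ip_def using q by simp
    then show "(\<Sum>m<q. g ((ip q x k + m) mod q)) = (\<Sum>s<q. g s)" by (rule rot_sum)
  qed
  also have "\<dots> = of_nat (q ^ n) * (\<Sum>s<q. g s)" using vecs_finite_card by simp
  finally show ?thesis .
qed



lemma success_eq:
  fixes n :: nat and k :: "nat list"
  assumes "1 \<le> b" "b < q" "a < q"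
  defines "c \<equiv> lrf_c q b"
  defines "F \<equiv> (\<lambda>s. ((s + q - a) mod q) div b)"
  defines "B \<equiv> (\<Sum>x\<in>vecs n q. cis (2 * pi * real (ip q x k) / real q) * cis (- (2 * pi * real (F (ip q x k)) / real c)))"
  shows "success_prob n q a b k = (cmod B) ^ 2 / (real q ^ n) ^ 2"
proof -
  have q0: "q > 0" using assms by simp
  have c2: "c \<ge> 2" using c_facts[OF assms(1,2)] c_def by simp
  define K where "K = (1 / sqrt (real q)) ^ n * (1 / sqrt (real q ^ n) * (1 / sqrt (real c)))"
  have inner: "(\<Sum>x\<in>vecs n q. qft_coef n q k x * apply_oracle (LRF q k a b) c (init_state n q c) (x, z'))
      = complex_of_real K * cis (2 * pi * real z' / real c) * B" if z': "z' < c" for z'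
  proof -
    have "(\<Sum>x\<in>vecs n q. qft_coef n q k x * apply_oracle (LRF q k a b) c (init_state n q c) (x, z'))
      = (\<Sum>x\<in>vecs n q. (complex_of_real K * cis (2 * pi * real z' / real c)) *
           (cis (2 * pi * real (ip q x k) / real q) * cis (- (2 * pi * real (F (ip q x k)) / real c))))"
    proof (rule sum.cong[OF refl])
      fix x assume x: "x \<in> vecs n q"
      have l: "LRF q k a b x = F (ip q x k)" unfolding F_def by (rule LRF_eq[OF assms(1-3)])
      show "qft_coef n q k x * apply_oracle (LRF q k a b) c (init_state n q c) (x, z') =
        (complex_of_real K * cis (2 * pi * real z' / real c)) *
           (cis (2 * pi * real (ip q x k) / real q) * cis (- (2 * pi * real (F (ip q x k)) / real c)))"
        unfolding qft_val[OF x q0] oracle_val[OF x z'] l K_def by (simp add: mult_ac)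
    qed
    also have "\<dots> = complex_of_real K * cis (2 * pi * real z' / real c) * B"
      unfolding B_def by (rule sum_distrib_left[symmetric])
    finally show ?thesis .
  qed
  have K0: "K \<ge> 0" unfolding K_def by simp
  have p1: "((1 / sqrt (real q)) ^ n) ^ 2 = (1 / real q) ^ n"
  proof -
    have "((1 / sqrt (real q)) ^ n) ^ 2 = ((1 / sqrt (real q)) ^ 2) ^ n" by (metis power_mult mult.commute)
    also have "(1 / sqrt (real q)) ^ 2 = 1 / real q" by (simp add: power_divide)
    finally show ?thesis .
  qed
  have p2: "(1 / sqrt (real q ^ n)) ^ 2 = 1 / real q ^ n" by (simp add: power_divide)
  have p3: "(1 / sqrt (real c)) ^ 2 = 1 / real c" by (simp add: power_divide)
  have K2: "K ^ 2 = 1 / (real q ^ n) ^ 2 / real c"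
  proof -
    have "K ^ 2 = ((1 / sqrt (real q)) ^ n) ^ 2 * ((1 / sqrt (real q ^ n)) ^ 2 * (1 / sqrt (real c)) ^ 2)"
      unfolding K_def by (simp only: power_mult_distrib)
    also have "\<dots> = (1 / real q) ^ n * (1 / real q ^ n * (1 / real c))" unfolding p1 p2 p3 ..
    finally show ?thesis by (simp add: power_divide power2_eq_square)
  qed
  have "success_prob n q a b k = (\<Sum>z'<c. (cmod (complex_of_real K * cis (2 * pi * real z' / real c) * B))\<^sup>2)"
    unfolding success_prob_def Let_def c_def[symmetric] outcome_prob_def using inner by simp
  also have "\<dots> = (\<Sum>z'<c. K ^ 2 * (cmod B) ^ 2)"
    by (simp add: norm_mult K0 power_mult_distrib)
  also have "\<dots> = real c * (K ^ 2 * (cmod B) ^ 2)" by simp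
  also have "\<dots> = (cmod B) ^ 2 / (real q ^ n) ^ 2" unfolding K2 using c2 by (simp add: field_simps)
  finally show ?thesis .
qed



lemma term_bound:
  assumes "1 \<le> b" "b < q" "t < q"
  defines "c \<equiv> lrf_c q b"
  shows "cmod (cis (2 * pi * real t / real q) * cis (- (2 * pi * real (t div b) / real c))
           - cis (2 * pi * real (t mod b) / real q)) \<le> 2 * pi * (real (c * b) - real q) / real q"
proof -
  have cb: "q \<le> c * b" "c * b < q + b" "2 \<le> c" using c_facts[OF assms(1,2)] c_def by auto
  have q0: "real q > 0" using assms by simp
  have c0: "real c > 0" using cb by simp
  have vc: "t div b < c"
  proof -
    have "(t div b) * b \<le> t" by simp
    then have "(t div b) * b < c * b" using cb assms by linarith
    then show ?thesis by simp
  qed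
  define v where "v = real (t div b)"
  define r where "r = real (t mod b)"
  define d where "d = real (c * b) - real q"
  have "real q \<le> real (c * b)" using cb(1) by (simp only: of_nat_le_iff)
  then have d0: "d \<ge> 0" unfolding d_def by linarith
  have tv: "real t = v * real b + r" unfolding v_def r_def
    by (metis div_mult_mod_eq of_nat_add of_nat_mult)
  have v0: "0 \<le> v" "v \<le> real c" unfolding v_def using vc by auto
  have eq: "2 * pi * real t / real q - 2 * pi * v / real c - 2 * pi * r / real q = 2 * pi * d / real q * (v / real c)"
    unfolding tv d_def using q0 c0 by (simp add: field_simps)
  have le: "2 * pi * d / real q * (v / real c) \<le> 2 * pi * d / real q * 1"
    using v0 d0 q0 c0 by (intro mult_left_mono) (auto simp: field_simps)
  have ge: "0 \<le> 2 * pi * d / real q * (v / real c)" using v0 d0 q0 c0 by simp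
  have "cis (2 * pi * real t / real q) * cis (- (2 * pi * real (t div b) / real c)) = cis (2 * pi * real t / real q - 2 * pi * v / real c)"
    unfolding cis_mult v_def by simp
  then have "cmod (cis (2 * pi * real t / real q) * cis (- (2 * pi * real (t div b) / real c))
           - cis (2 * pi * real (t mod b) / real q)) \<le> \<bar>2 * pi * real t / real q - 2 * pi * v / real c - 2 * pi * r / real q\<bar>"
    using cis_dist unfolding r_def by simp
  also have "\<dots> \<le> 2 * pi * d / real q" unfolding eq using le ge by simp
  finally show ?thesis unfolding d_def .
qed

lemma sin_step:
  assumes "1 \<le> b" "b < q"
  defines "c \<equiv> lrf_c q b"
  shows "real c * sin (pi * real b / real q) \<ge> 2 - pi * (real (c * b) - real q) / real q"
proof -
  have cb: "q \<le> c * b" "c * b < q + b" "2 \<le> c" using c_facts[OF assms(1,2)] c_def by auto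
  have q0: "real q > 0" using assms by simp
  have c0: "real c > 0" using cb by simp
  define d where "d = real (c * b) - real q"
  have "real q \<le> real (c * b)" using cb(1) by (simp only: of_nat_le_iff)
  then have d0: "d \<ge> 0" unfolding d_def by linarith
  have s1: "sin (pi * real b / real q) \<ge> 0" using assms q0 by (intro sin_ge_zero) (auto simp: field_simps)
  have s2: "sin (pi / real c) \<ge> 0" using c0 cb by (intro sin_ge_zero) (auto simp: field_simps)
  have n1: "cmod (cis (2 * pi / real c) - 1) = 2 * sin (pi / real c)"
    unfolding cis_minus_one using s2 by simp
  have n2: "cmod (cis (2 * pi * real b / real q) - 1) = 2 * sin (pi * real b / real q)"
    unfolding cis_minus_one using s1 by simp
  have "cis (2 * pi / real c) - 1 = (cis (2 * pi * real b / real q) - 1) + (cis (2 * pi / real c) - cis (2 * pi * real b / real q))"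
    by simp
  then have "cmod (cis (2 * pi / real c) - 1) \<le> cmod (cis (2 * pi * real b / real q) - 1) + cmod (cis (2 * pi / real c) - cis (2 * pi * real b / real q))"
    by (metis norm_triangle_ineq)
  also have "cmod (cis (2 * pi / real c) - cis (2 * pi * real b / real q)) \<le> \<bar>2 * pi / real c - 2 * pi * real b / real q\<bar>"
    by (rule cis_dist)
  also have "2 * pi / real c - 2 * pi * real b / real q = - (2 * pi * d / (real q * real c))"
    unfolding d_def using q0 c0 by (simp add: field_simps)
  finally have "2 * sin (pi / real c) \<le> 2 * sin (pi * real b / real q) + 2 * pi * d / (real q * real c)"
    unfolding n1 n2 using d0 q0 c0 by simp
  then have "real c * sin (pi / real c) \<le> real c * sin (pi * real b / real q) + pi * d / real q"
    using c0 q0 by (simp add: field_simps)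
  then show ?thesis using c_sin[OF cb(3)] unfolding d_def by simp
qed



lemma main_bound:
  assumes "1 \<le> b" "b < q" "a < q"
  defines "c \<equiv> lrf_c q b"
  defines "F \<equiv> (\<lambda>s. ((s + q - a) mod q) div b)"
  shows "cmod (\<Sum>s<q. cis (2 * pi * real s / real q) * cis (- (2 * pi * real (F s) / real c)))
           \<ge> 2 * real q / pi - (2 * pi + 2) * (real (c * b) - real q)"
proof -
  have cb: "q \<le> c * b" "c * b < q + b" "2 \<le> c" using c_facts[OF assms(1,2)] c_def by auto
  have q0: "q > 0" using assms by simp
  have rq0: "real q > 0" using q0 by simp
  have c0: "real c > 0" using cb by simp
  define d where "d = real (c * b) - real q"
  have "real q \<le> real (c * b)" using cb(1) by (simp only: of_nat_le_iff)
  then have d0: "d \<ge> 0" unfolding d_def by linarith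
  define G where "G = (\<lambda>s. cis (2 * pi * real s / real q) * cis (- (2 * pi * real (F s) / real c)))"
  define H where "H = (\<lambda>t. cis (2 * pi * real t / real q) * cis (- (2 * pi * real (t div b) / real c)))"
  define g where "g = (\<lambda>j. cis (2 * pi * real j / real q))"
  define J where "J = (\<lambda>t. g (t mod b))"
  have E1: "(\<Sum>s<q. G s) = (\<Sum>t<q. G ((a + t) mod q))" using rot_sum[OF assms(3), of G] by simp
  have E2: "G ((a + t) mod q) = cis (2 * pi * real a / real q) * H t" if t: "t < q" for t
  proof -
    have f: "F ((a + t) mod q) = t div b" unfolding F_def using mod_shift_back[OF t assms(3)] by simp
    have "cis (2 * pi * real ((a + t) mod q) / real q) = cis (2 * pi * real (a + t) / real q)"
      by (rule cis_periodic[OF q0, symmetric])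
    also have "\<dots> = cis (2 * pi * real a / real q) * cis (2 * pi * real t / real q)"
      unfolding cis_mult by (simp add: add_divide_distrib distrib_left)
    finally show ?thesis unfolding G_def H_def f by (simp only: mult.assoc)
  qed
  have "(\<Sum>s<q. G s) = cis (2 * pi * real a / real q) * (\<Sum>t<q. H t)"
    unfolding E1 sum_distrib_left using E2 by (intro sum.cong) auto
  then have nG: "cmod (\<Sum>s<q. G s) = cmod (\<Sum>t<q. H t)" by (simp add: norm_mult)
  have split: "(\<Sum>t<c * b. J t) = (\<Sum>t<q. J t) + (\<Sum>t\<in>{q..<c * b}. J t)"
    using sum.atLeastLessThan_concat[of 0 q "c * b" J] cb(1) by (simp add: atLeast0LessThan)
  have b1: "cmod (\<Sum>t<q. H t - J t) \<le> 2 * pi * d"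
  proof -
    have "cmod (\<Sum>t<q. H t - J t) \<le> (\<Sum>t<q. cmod (H t - J t))" by (rule norm_sum)
    also have "\<dots> \<le> (\<Sum>t<q. 2 * pi * d / real q)"
    proof (rule sum_mono)
      fix t assume "t \<in> {..<q}"
      then have "t < q" by simp
      then show "cmod (H t - J t) \<le> 2 * pi * d / real q"
        using term_bound[OF assms(1,2), of t] unfolding H_def J_def g_def d_def c_def by simp
    qed
    also have "\<dots> = 2 * pi * d" using rq0 by simp
    finally show ?thesis .
  qed
  have b2: "cmod (\<Sum>t\<in>{q..<c * b}. J t) \<le> d"
  proof -
    have "cmod (\<Sum>t\<in>{q..<c * b}. J t) \<le> (\<Sum>t\<in>{q..<c * b}. cmod (J t))" by (rule norm_sum)
    also have "\<dots> = real (c * b - q)" unfolding J_def g_def by simp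
    also have "\<dots> = d" unfolding d_def using cb(1) by (simp add: of_nat_diff)
    finally show ?thesis .
  qed
  have S2: "(\<Sum>t<c * b. J t) = of_nat c * (\<Sum>j<b. g j)" unfolding J_def by (rule sum_mod_rep)
  have gl: "cmod (\<Sum>j<b. g j) \<ge> real q * sin (pi * real b / real q) / pi"
    unfolding g_def using assms by (intro geom_lower) auto
  have ss: "real c * sin (pi * real b / real q) \<ge> 2 - pi * d / real q"
    using sin_step[OF assms(1,2)] unfolding c_def d_def .
  have nS2: "cmod (\<Sum>t<c * b. J t) \<ge> 2 * real q / pi - d"
  proof -
    have "cmod (\<Sum>t<c * b. J t) = real c * cmod (\<Sum>j<b. g j)" unfolding S2 by (simp add: norm_mult)
    also have "\<dots> \<ge> real c * (real q * sin (pi * real b / real q) / pi)"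
      using gl c0 by (intro mult_left_mono) auto
    moreover have "real c * (real q * sin (pi * real b / real q) / pi) = real q * (real c * sin (pi * real b / real q)) / pi"
      by simp
    moreover have "real q * (real c * sin (pi * real b / real q)) / pi \<ge> real q * (2 - pi * d / real q) / pi"
      using ss rq0 by (intro divide_right_mono mult_left_mono) auto
    moreover have "real q * (2 - pi * d / real q) / pi = 2 * real q / pi - d"
      using rq0 by (simp add: field_simps)
    ultimately show ?thesis by linarith
  qed
  have decomp: "(\<Sum>t<q. H t) = (\<Sum>t<c * b. J t) - (\<Sum>t\<in>{q..<c * b}. J t) + (\<Sum>t<q. H t - J t)"
    unfolding split by (simp add: sum_subtractf)
  have "cmod (\<Sum>t<q. H t) \<ge> cmod (\<Sum>t<c * b. J t) - cmod (\<Sum>t\<in>{q..<c * b}. J t) - cmod (\<Sum>t<q. H t - J t)"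
  proof -
    define P where "P = (\<Sum>t<c * b. J t)"
    define Q where "Q = (\<Sum>t\<in>{q..<c * b}. J t)"
    define R where "R = (\<Sum>t<q. H t - J t)"
    have 1: "cmod (P - Q) - cmod R \<le> cmod (P - Q + R)" by (rule norm_diff_ineq)
    have 2: "cmod P - cmod Q \<le> cmod (P - Q)" by (rule norm_triangle_ineq2)
    from 1 2 have "cmod P - cmod Q - cmod R \<le> cmod (P - Q + R)" by linarith
    then show ?thesis unfolding decomp P_def Q_def R_def .
  qed
  then have "cmod (\<Sum>t<q. H t) \<ge> 2 * real q / pi - (2 * pi + 2) * d"
    using nS2 b1 b2 by (simp add: algebra_simps)
  then show ?thesis using nG unfolding G_def d_def by simp
qed

lemma sq_bound:
  fixes X A Bv :: real
  assumes "X \<ge> 0" "X \<ge> A - Bv" "A \<ge> 0" "Bv \<ge> 0"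
  shows "X ^ 2 \<ge> A ^ 2 - 2 * A * Bv"
proof (cases "A - Bv \<ge> 0")
  case True
  have "(A - Bv) ^ 2 \<le> X ^ 2" using True assms by (intro power_mono) auto
  moreover have "(A - Bv) ^ 2 = A ^ 2 - 2 * A * Bv + Bv ^ 2" by (simp add: power2_diff)
  moreover have "Bv ^ 2 \<ge> 0" by simp
  ultimately show ?thesis by linarith
next
  case False
  then have "A * (A - 2 * Bv) \<le> 0" using assms by (intro mult_nonneg_nonpos) auto
  moreover have "A * (A - 2 * Bv) = A ^ 2 - 2 * A * Bv" by (simp add: power2_eq_square algebra_simps)
  moreover have "X ^ 2 \<ge> 0" by simp
  ultimately show ?thesis by linarith
qed

theorem theorem9:
  shows "\<exists>C::real. \<forall>n q b a k.
     1 \<le> n \<longrightarrow> 2 \<le> q \<longrightarrow> 1 \<le> b \<longrightarrow> b < q \<longrightarrow> a < q \<longrightarrow>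
     k \<in> vecs n q \<longrightarrow> (\<exists>i<n. coprime (k ! i) q) \<longrightarrow>
     success_prob n q a b k \<ge> 4 / pi\<^sup>2 - C * (real (lrf_c q b * b) - real q) / real q"
proof (intro exI allI impI)
  fix n q b a :: nat and k :: "nat list"
  assume n: "1 \<le> n" and q2: "2 \<le> q" and b1: "1 \<le> b" and bq: "b < q" and aq: "a < q"
    and k: "k \<in> vecs n q" and ex: "\<exists>i<n. coprime (k ! i) q"
  obtain i where i: "i < n" "coprime (k ! i) q" using ex by blast
  define c where "c = lrf_c q b"
  define F where "F = (\<lambda>s. ((s + q - a) mod q) div b)"
  define g where "g = (\<lambda>s. cis (2 * pi * real s / real q) * cis (- (2 * pi * real (F s) / real c)))"
  define B where "B = (\<Sum>x\<in>vecs n q. g (ip q x k))"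
  define d where "d = real (c * b) - real q"
  have q0: "q > 0" using q2 by simp
  have rq0: "real q > 0" using q0 by simp
  have cb: "q \<le> c * b" using c_facts[OF b1 bq] c_def by auto
  have "real q \<le> real (c * b)" using cb by (simp only: of_nat_le_iff)
  then have d0: "d \<ge> 0" unfolding d_def by linarith
  have sp: "success_prob n q a b k = (cmod B) ^ 2 / (real q ^ n) ^ 2"
    using success_eq[OF b1 bq aq, of n k] unfolding B_def g_def F_def c_def .
  have U: "of_nat q * B = of_nat (q ^ n) * (\<Sum>s<q. g s)"
    unfolding B_def by (rule sum_uniform[OF k i q0])
  then have "real q * cmod B = real q ^ n * cmod (\<Sum>s<q. g s)"
    by (metis norm_mult norm_of_nat of_nat_power)
  then have X: "cmod B / real q ^ n = cmod (\<Sum>s<q. g s) / real q"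
    using rq0 by (simp add: field_simps)
  define X where "X = cmod (\<Sum>s<q. g s) / real q"
  have sp2: "success_prob n q a b k = X ^ 2"
    unfolding sp X_def X[symmetric] by (simp add: power_divide)
  have mb: "cmod (\<Sum>s<q. g s) \<ge> 2 * real q / pi - (2 * pi + 2) * d"
    using main_bound[OF b1 bq aq] unfolding g_def F_def c_def d_def .
  have XB: "X \<ge> 2 / pi - (2 * pi + 2) * d / real q"
  proof -
    have "cmod (\<Sum>s<q. g s) / real q \<ge> (2 * real q / pi - (2 * pi + 2) * d) / real q"
      using mb rq0 by (intro divide_right_mono) auto
    moreover have "(2 * real q / pi - (2 * pi + 2) * d) / real q = 2 / pi - (2 * pi + 2) * d / real q"
      using rq0 by (simp add: field_simps)
    ultimately show ?thesis unfolding X_def by simp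
  qed
  have "X ^ 2 \<ge> (2 / pi) ^ 2 - 2 * (2 / pi) * ((2 * pi + 2) * d / real q)"
    using XB d0 rq0 by (intro sq_bound) (auto simp: X_def)
  moreover have "4 / pi\<^sup>2 - 4 * (2 * pi + 2) / pi * d / real q = (2 / pi) ^ 2 - 2 * (2 / pi) * ((2 * pi + 2) * d / real q)"
    by (simp add: field_simps power2_eq_square)
  ultimately have "success_prob n q a b k \<ge> 4 / pi\<^sup>2 - 4 * (2 * pi + 2) / pi * d / real q"
    unfolding sp2 by linarith
  then show "success_prob n q a b k \<ge> 4 / pi\<^sup>2 - 4 * (2 * pi + 2) / pi * (real (lrf_c q b * b) - real q) / real q"
    unfolding d_def c_def .
qed

end
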